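(* Let $p,q$ be coprime positive integers. Then $E(p,q)=d_c(e^{2\pi i/3},p/q)$.
   Context: Hyperbolic plane is modelled on the upper half-plane $\{\operatorname{Im}z>0\}$ with absolute $\mathbb R\cup\{\infty\}$. The Farey tesselation consists of the hyperbolic geodesics joining $m/n$ and $p'/q'$ (integers, $\infty=1/0$) with $|mq'-np'|=1$; it tesselates the plane into ideal triangles. For a point $z$ not on any Farey line and a rational (or $\infty$) absolute point $r$, $d_c(z,r)$ is the number of Farey lines that intersect the geodesic ray from $z$ to $r$. For coprime positive integers $p,q$, the Euclid complexity $E(p,q)$ is the number of subtractions in the subtractive Euclid algorithm converting the pair $(p,q)$ into $(0,1)$, i.e. the sum of the partial quotients of the continued fraction of $p/q$. *)

theory Defs
  imports Complex_Main
begin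

text \<open>Upper half-plane model. Absolute points are rationals m/n with n = 0 meaning infinity.\<close>

definition farey_line :: "int \<Rightarrow> int \<Rightarrow> int \<Rightarrow> int \<Rightarrow> complex set" where
  "farey_line m n p q =
     (if n = 0 then {z. 0 < Im z \<and> Re z = real_of_int p / real_of_int q}
      else if q = 0 then {z. 0 < Im z \<and> Re z = real_of_int m / real_of_int n}
      else {z. 0 < Im z \<and>
               cmod (z - complex_of_real ((real_of_int m / real_of_int n + real_of_int p / real_of_int q) / 2))
                 = \<bar>real_of_int m / real_of_int n - real_of_int p / real_of_int q\<bar> / 2})"

definition farey_lines :: "complex set set" where
  "farey_lines = {farey_line m n p q | m n p q. \<bar>m * q - n * p\<bar> = 1}"

definition geo_ray :: "complex \<Rightarrow> real \<Rightarrow> complex set" where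
  "geo_ray z r =
     (if Re z = r then {w. Re w = r \<and> 0 < Im w \<and> Im w \<le> Im z}
      else (let c = ((cmod z)\<^sup>2 - r\<^sup>2) / (2 * (Re z - r)) in
            {w. 0 < Im w \<and> cmod (w - complex_of_real c) = \<bar>r - c\<bar> \<and>
                min (Re z) r \<le> Re w \<and> Re w \<le> max (Re z) r}))"

definition d_c :: "complex \<Rightarrow> real \<Rightarrow> nat" where
  "d_c z r = card {L \<in> farey_lines. L \<inter> geo_ray z r \<noteq> {}}"

function euclid_sub :: "nat \<Rightarrow> nat \<Rightarrow> nat" where
  "euclid_sub p q =
     (if p = 0 \<or> q = 0 then 0
      else if q \<le> p then Suc (euclid_sub (p - q) q)
      else Suc (euclid_sub p (q - p)))"
  by pat_completeness auto
termination by (relation "measure (\<lambda>(p, q). p + q)") auto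

end

theory Submission
  imports Defs
begin

definition cc :: "real \<Rightarrow> real" where "cc r = (r^2 - 1)/(2*r+1)"
definition rho :: "real \<Rightarrow> real" where "rho r = (r^2 + r + 1)/(2*r+1)"
definition hh :: "real \<Rightarrow> real \<Rightarrow> real \<Rightarrow> real \<Rightarrow> real" where
  "hh a b r x = (x-a)*(x-b) + (rho r)^2 - (x - cc r)^2"

lemma z0_eq: "exp (2 * pi * \<i> / 3) = Complex (-1/2) (sqrt 3 / 2)"
proof -
  have "2 * pi * \<i> / 3 = \<i> * complex_of_real (2*pi/3)" by simp
  then have "exp (2 * pi * \<i> / 3) = cis (2*pi/3)" by (simp only: cis_conv_exp)
  then show ?thesis by (simp add: complex_eq_iff cos_120 sin_120)
qed

lemma cmod_eq_iff: "0 \<le> R \<Longrightarrow> cmod (w - complex_of_real c) = R \<longleftrightarrow> (Re w - c)^2 + (Im w)^2 = R^2"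
proof -
  assume R: "0 \<le> R"
  have "cmod (w - of_real c) = R \<longleftrightarrow> (cmod (w - of_real c))^2 = R^2"
    using R by (simp add: power2_eq_iff_nonneg)
  also have "\<dots> \<longleftrightarrow> (Re w - c)^2 + (Im w)^2 = R^2" by (simp add: cmod_power2)
  finally show ?thesis .
qed

lemma rho_pos: "0 < r \<Longrightarrow> 0 < rho r"
  unfolding rho_def by (intro divide_pos_pos) (auto intro!: add_pos_pos)

lemma r_minus_cc: "0 < r \<Longrightarrow> r - cc r = rho r"
  unfolding cc_def rho_def by (simp add: field_simps power2_eq_square)

lemma cc_minus_rho: assumes "0 < r" shows "cc r - rho r < -1/2"
proof -
  have d: "0 < 2*r+1" using assms by simp
  have "cc r - rho r = ((r^2-1) - (r^2+r+1))/(2*r+1)" unfolding cc_def rho_def by (simp only: diff_divide_distrib)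
  also have "\<dots> = -(r+2)/(2*r+1)" by (simp add: algebra_simps power2_eq_square)
  also have "\<dots> < -1/2" using d by (simp add: field_simps)
  finally show ?thesis .
qed

lemma rho_z0: assumes "0 < r" shows "(rho r)^2 - (-1/2 - cc r)^2 = 3/4"
proof -
  have d: "0 < 2*r+1" using assms by simp
  have e1: "rho r * (2*r+1) = r^2+r+1" unfolding rho_def using d by simp
  have e2: "cc r * (2*r+1) = r^2 - 1" unfolding cc_def using d by simp
  have "((rho r)^2 - (-1/2 - cc r)^2) * (2*r+1)^2 = (rho r * (2*r+1))^2 - (-(2*r+1)/2 - cc r * (2*r+1))^2"
    by (simp add: power2_eq_square field_simps)
  also have "\<dots> = 3/4 * (2*r+1)^2" unfolding e1 e2 by (simp add: power2_eq_square field_simps)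
  finally show ?thesis using d by simp
qed

lemma ray_char:
  assumes r: "0 < r"
  shows "w \<in> geo_ray (exp (2*pi*\<i>/3)) r \<longleftrightarrow>
    0 < Im w \<and> (Re w - cc r)^2 + (Im w)^2 = (rho r)^2 \<and> -1/2 \<le> Re w \<and> Re w \<le> r"
proof -
  have c: "((cmod (Complex (-1/2) (sqrt 3/2)))^2 - r^2) / (2 * (Re (Complex (-1/2) (sqrt 3/2)) - r)) = cc r"
    using r by (simp add: cmod_power2 cc_def field_simps power_divide)
  have ab: "\<bar>r - cc r\<bar> = rho r" using r_minus_cc[OF r] rho_pos[OF r] by simp
  have ne: "Re (Complex (-1/2) (sqrt 3/2)) \<noteq> r" using r by simp
  show ?thesis unfolding z0_eq geo_ray_def Let_def
    using r c ab ne cmod_eq_iff[of "rho r" w "cc r"] rho_pos[OF r] by auto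
qed

lemma ray_re_lt:
  assumes r: "0 < r" and w: "w \<in> geo_ray (exp (2*pi*\<i>/3)) r"
  shows "Re w < r"
proof -
  have *: "0 < Im w" "(Re w - cc r)^2 + (Im w)^2 = (rho r)^2" "Re w \<le> r"
    using w ray_char[OF r] by auto
  show ?thesis
  proof (rule ccontr)
    assume "\<not> Re w < r"
    then have "Re w = r" using * by simp
    then have "(Im w)^2 = 0" using *(2) r_minus_cc[OF r] by simp
    then show False using *(1) by simp
  qed
qed

lemma inside:
  assumes r: "0 < r" and x: "-1/2 \<le> x" "x < r"
  shows "(x - cc r)^2 < (rho r)^2"
proof -
  have a: "0 < rho r - (x - cc r)" using x r_minus_cc[OF r] by simp
  have b: "0 < rho r + (x - cc r)" using x cc_minus_rho[OF r] by simp
  have "0 < (rho r - (x - cc r)) * (rho r + (x - cc r))" using a b by simp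
  then show ?thesis by (simp add: algebra_simps power2_eq_square)
qed

lemma ray_pt:
  assumes r: "0 < r" and x: "-1/2 \<le> x" "x < r"
  shows "Complex x (sqrt ((rho r)^2 - (x - cc r)^2)) \<in> geo_ray (exp (2*pi*\<i>/3)) r"
  using inside[OF r x] x ray_char[OF r] by simp

lemma fl_v1: "farey_line m 0 p q = {z. 0 < Im z \<and> Re z = of_int p / of_int q}"
  by (simp add: farey_line_def)
lemma fl_v2: "n \<noteq> 0 \<Longrightarrow> farey_line m n p 0 = {z. 0 < Im z \<and> Re z = of_int m / of_int n}"
  by (simp add: farey_line_def)

lemma fl_c:
  assumes "n \<noteq> 0" "q \<noteq> 0"
  shows "farey_line m n p q = {z. 0 < Im z \<and> (Re z - of_int m / of_int n)*(Re z - of_int p / of_int q) + (Im z)^2 = 0}"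
proof -
  define a where "a = (of_int m / of_int n :: real)"
  define b where "b = (of_int p / of_int q :: real)"
  have "cmod (z - of_real ((a+b)/2)) = \<bar>a - b\<bar>/2 \<longleftrightarrow> (Re z - a)*(Re z - b) + (Im z)^2 = 0" for z
  proof -
    have "cmod (z - of_real ((a+b)/2)) = \<bar>a - b\<bar>/2 \<longleftrightarrow> (Re z - (a+b)/2)^2 + (Im z)^2 = (\<bar>a - b\<bar>/2)^2"
      by (rule cmod_eq_iff) simp
    also have "\<dots> \<longleftrightarrow> (Re z - a)*(Re z - b) + (Im z)^2 = 0"
      by (simp add: power_divide power2_eq_square field_simps) (auto simp: algebra_simps)
    finally show ?thesis .
  qed
  then show ?thesis using assms unfolding farey_line_def a_def b_def by auto
qed

lemma fl_sym: "farey_line m n p q = farey_line p q m n"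
  by (cases "n = 0"; cases "q = 0") (auto simp: fl_v1 fl_v2 fl_c mult.commute)

lemma hh_interp: "(r + 1/2) * hh a b r x = (r - x) * hh a b r (-1/2) + (x + 1/2) * hh a b r r"
  unfolding hh_def by (simp add: field_simps power2_eq_square)

lemma hh_z0: "0 < r \<Longrightarrow> hh a b r (-1/2) = (a + 1/2)*(b+1/2) + 3/4"
  using rho_z0[of r] unfolding hh_def by (simp add: algebra_simps power2_eq_square)

lemma hh_r: "0 < r \<Longrightarrow> hh a b r r = (r-a)*(r-b)"
  using r_minus_cc[of r] unfolding hh_def by simp

lemma hh_z0_pos:
  assumes "\<bar>a - b\<bar> \<le> 1" "0 < r" shows "0 < hh a b r (-1/2)"
proof -
  have e: "(a+1/2)*(b+1/2) = ((a+b+1)/2)^2 - ((a-b)/2)^2" by (simp add: power2_eq_square field_simps)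
  have "(a-b)^2 \<le> 1" using assms(1) by (simp add: abs_square_le_1)
  then have "((a-b)/2)^2 \<le> 1/4" by (simp add: power_divide)
  moreover have "0 \<le> ((a+b+1)/2)^2" by simp
  ultimately show ?thesis using hh_z0[OF assms(2), of a b] e by linarith
qed

definition DD :: "int \<Rightarrow> int \<Rightarrow> ((int \<times> int) \<times> (int \<times> int)) set" where
  "DD p q = {((u1,u2),(v1,v2)). 0 \<le> u1 \<and> 0 \<le> u2 \<and> 0 \<le> v1 \<and> 0 \<le> v2 \<and> u1*v2 - u2*v1 = -1
      \<and> 0 < q*v1 - p*v2 \<and> 0 < p*u2 - q*u1}"

definition sh1 :: "(int \<times> int) \<times> (int \<times> int) \<Rightarrow> (int \<times> int) \<times> (int \<times> int)" where
  "sh1 x = (case x of ((u1,u2),(v1,v2)) \<Rightarrow> ((u1+u2,u2),(v1+v2,v2)))"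
definition sh2 :: "(int \<times> int) \<times> (int \<times> int) \<Rightarrow> (int \<times> int) \<times> (int \<times> int)" where
  "sh2 x = (case x of ((u1,u2),(v1,v2)) \<Rightarrow> ((u1,u1+u2),(v1,v1+v2)))"

lemma tri:
  fixes u1 u2 v1 v2 :: int
  assumes nn: "0 \<le> u1" "0 \<le> u2" "0 \<le> v1" "0 \<le> v2" and d: "u1*v2 - u2*v1 = -1"
  shows "(u1 = 0 \<and> u2 = 1 \<and> v1 = 1 \<and> v2 = 0) \<or> (u2 \<le> u1 \<and> v2 \<le> v1) \<or> (u1 \<le> u2 \<and> v1 \<le> v2)"
proof (rule ccontr)
  assume H: "\<not> ?thesis"
  have id: "(v1-v2)*u1 + (u2-u1)*v1 = 1" using d by (simp add: algebra_simps)
  have "(u1 < u2 \<and> v2 < v1) \<or> (u2 < u1 \<and> v1 < v2)" using H by auto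
  then show False
  proof
    assume A: "u1 < u2 \<and> v2 < v1"
    have t1: "0 \<le> (v1-v2)*u1" using A nn by simp
    have "v1 \<le> (u2-u1)*v1" using A nn by simp
    then have t2: "(u2-u1)*v1 = 1" using id t1 A nn by linarith
    then have "(v1-v2)*u1 = 0" using id by simp
    then have u10: "u1 = 0" using A by simp
    have "v1 = 1" using t2 A nn by (metis pos_zmult_eq_1_iff zero_less_mult_iff mult.commute diff_gt_0_iff_gt)
    then have "u2 = 1" "v2 = 0" using t2 u10 A nn by auto
    then show False using H u10 \<open>v1 = 1\<close> by simp
  next
    assume B: "u2 < u1 \<and> v1 < v2"
    have "(v1-v2)*u1 \<le> 0" using B nn by (simp add: mult_nonpos_nonneg)
    moreover have "(u2-u1)*v1 \<le> 0" using B nn by (simp add: mult_nonpos_nonneg)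
    ultimately show False using id by linarith
  qed
qed

lemma DD_empty: "0 \<le> p \<Longrightarrow> 0 \<le> q \<Longrightarrow> p = 0 \<or> q = 0 \<Longrightarrow> DD p q = {}"
  unfolding DD_def by (auto simp: mult_less_0_iff)

lemma e0_in: "0 < p \<Longrightarrow> 0 < q \<Longrightarrow> ((0,1),(1,0)) \<in> DD p q"
  unfolding DD_def by simp

lemma DD_rec1:
  assumes q: "0 < q" "q \<le> p"
  shows "DD p q = insert ((0,1),(1,0)) (sh1 ` DD (p-q) q)"
proof (rule set_eqI, rule iffI)
  fix x assume x: "x \<in> DD p q"
  obtain u1 u2 v1 v2 where xe: "x = ((u1,u2),(v1,v2))" by (metis prod.exhaust)
  have c: "0 \<le> u1" "0 \<le> u2" "0 \<le> v1" "0 \<le> v2" "u1*v2 - u2*v1 = -1"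
      "0 < q*v1 - p*v2" "0 < p*u2 - q*u1" using x xe unfolding DD_def by auto
  define al where "al = q*v1 - p*v2"
  define be where "be = p*u2 - q*u1"
  have id: "al*(u1-u2) + be*(v1-v2) = (p-q)*(u2*v1-u1*v2)" unfolding al_def be_def by (simp add: algebra_simps)
  then have id2: "al*(u1-u2) + be*(v1-v2) = p - q" proof -
    have "u2*v1-u1*v2 = 1" using c(5) by linarith
    then show ?thesis using id by simp
  qed
  have ge: "u2 \<le> u1 \<and> v2 \<le> v1" if ne: "x \<noteq> ((0,1),(1,0))"
  proof -
    have "(u2 \<le> u1 \<and> v2 \<le> v1) \<or> (u1 \<le> u2 \<and> v1 \<le> v2)" using tri[OF c(1-5)] ne xe by auto
    then show ?thesis
    proof
      assume L: "u1 \<le> u2 \<and> v1 \<le> v2"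
      have a: "al*(u1-u2) \<le> 0" using L c(6) al_def by (simp add: mult_nonneg_nonpos)
      have b: "be*(v1-v2) \<le> 0" using L c(7) be_def by (simp add: mult_nonneg_nonpos)
      have "al*(u1-u2) = 0" "be*(v1-v2) = 0" using a b id2 q by linarith+
      moreover have "0 < al" "0 < be" using c(6,7) al_def be_def by auto
      ultimately show ?thesis by auto
    qed
  qed
  show "x \<in> insert ((0,1),(1,0)) (sh1 ` DD (p-q) q)"
  proof (cases "x = ((0,1),(1,0))")
    case True then show ?thesis by simp
  next
    case False
    note g = ge[OF False]
    have "((u1-u2,u2),(v1-v2,v2)) \<in> DD (p-q) q"
      using c g unfolding DD_def by (simp add: algebra_simps)
    moreover have "x = sh1 ((u1-u2,u2),(v1-v2,v2))" using xe by (simp add: sh1_def)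
    ultimately show ?thesis by blast
  qed
next
  fix x assume "x \<in> insert ((0,1),(1,0)) (sh1 ` DD (p-q) q)"
  then show "x \<in> DD p q"
  proof
    assume "x = ((0,1),(1,0))" then show ?thesis using e0_in q by simp
  next
    assume "x \<in> sh1 ` DD (p-q) q"
    then obtain y where y: "y \<in> DD (p-q) q" "x = sh1 y" by blast
    obtain u1 u2 v1 v2 where ye: "y = ((u1,u2),(v1,v2))" by (metis prod.exhaust)
    show ?thesis using y ye unfolding DD_def sh1_def by (simp add: algebra_simps)
  qed
qed

lemma DD_rec2:
  assumes q: "0 < p" "p \<le> q"
  shows "DD p q = insert ((0,1),(1,0)) (sh2 ` DD p (q-p))"
proof (rule set_eqI, rule iffI)
  fix x assume x: "x \<in> DD p q"
  obtain u1 u2 v1 v2 where xe: "x = ((u1,u2),(v1,v2))" by (metis prod.exhaust)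
  have c: "0 \<le> u1" "0 \<le> u2" "0 \<le> v1" "0 \<le> v2" "u1*v2 - u2*v1 = -1"
      "0 < q*v1 - p*v2" "0 < p*u2 - q*u1" using x xe unfolding DD_def by auto
  define al where "al = q*v1 - p*v2"
  define be where "be = p*u2 - q*u1"
  have id: "al*(u2-u1) + be*(v2-v1) = (q-p)*(u2*v1-u1*v2)" unfolding al_def be_def by (simp add: algebra_simps)
  then have id2: "al*(u2-u1) + be*(v2-v1) = q - p" proof -
    have "u2*v1-u1*v2 = 1" using c(5) by linarith
    then show ?thesis using id by simp
  qed
  have ge: "u1 \<le> u2 \<and> v1 \<le> v2" if ne: "x \<noteq> ((0,1),(1,0))"
  proof -
    have "(u2 \<le> u1 \<and> v2 \<le> v1) \<or> (u1 \<le> u2 \<and> v1 \<le> v2)" using tri[OF c(1-5)] ne xe by auto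
    then show ?thesis
    proof
      assume L: "u2 \<le> u1 \<and> v2 \<le> v1"
      have a: "al*(u2-u1) \<le> 0" using L c(6) al_def by (simp add: mult_nonneg_nonpos)
      have b: "be*(v2-v1) \<le> 0" using L c(7) be_def by (simp add: mult_nonneg_nonpos)
      have "al*(u2-u1) = 0" "be*(v2-v1) = 0" using a b id2 q by linarith+
      moreover have "0 < al" "0 < be" using c(6,7) al_def be_def by auto
      ultimately show ?thesis by auto
    qed
  qed
  show "x \<in> insert ((0,1),(1,0)) (sh2 ` DD p (q-p))"
  proof (cases "x = ((0,1),(1,0))")
    case True then show ?thesis by simp
  next
    case False
    note g = ge[OF False]
    have "((u1,u2-u1),(v1,v2-v1)) \<in> DD p (q-p)"
      using c g unfolding DD_def by (simp add: algebra_simps)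
    moreover have "x = sh2 ((u1,u2-u1),(v1,v2-v1))" using xe by (simp add: sh2_def)
    ultimately show ?thesis by blast
  qed
next
  fix x assume "x \<in> insert ((0,1),(1,0)) (sh2 ` DD p (q-p))"
  then show "x \<in> DD p q"
  proof
    assume "x = ((0,1),(1,0))" then show ?thesis using e0_in q by simp
  next
    assume "x \<in> sh2 ` DD p (q-p)"
    then obtain y where y: "y \<in> DD p (q-p)" "x = sh2 y" by blast
    obtain u1 u2 v1 v2 where ye: "y = ((u1,u2),(v1,v2))" by (metis prod.exhaust)
    show ?thesis using y ye unfolding DD_def sh2_def by (simp add: algebra_simps)
  qed
qed

lemma inj_sh1: "inj sh1" unfolding inj_def sh1_def by auto
lemma inj_sh2: "inj sh2" unfolding inj_def sh2_def by auto

lemma e0_notin1: "((0,1),(1,0)) \<notin> sh1 ` DD a b"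
proof
  assume "((0,1),(1,0)) \<in> sh1 ` DD a b"
  then obtain y where y: "y \<in> DD a b" "((0,1),(1,0)) = sh1 y" by blast
  obtain u1 u2 v1 v2 where ye: "y = ((u1,u2),(v1,v2))" by (metis prod.exhaust)
  show False using y ye unfolding DD_def sh1_def by auto
qed

lemma e0_notin2: "((0,1),(1,0)) \<notin> sh2 ` DD a b"
proof
  assume "((0,1),(1,0)) \<in> sh2 ` DD a b"
  then obtain y where y: "y \<in> DD a b" "((0,1),(1,0)) = sh2 y" by blast
  obtain u1 u2 v1 v2 where ye: "y = ((u1,u2),(v1,v2))" by (metis prod.exhaust)
  show False using y ye unfolding DD_def sh2_def by auto
qed

lemma DD_card: "finite (DD (int p) (int q)) \<and> card (DD (int p) (int q)) = euclid_sub p q"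
proof (induction p q rule: euclid_sub.induct)
  case (1 p q)
  show ?case
  proof (cases "p = 0 \<or> q = 0")
    case True
    then have "DD (int p) (int q) = {}" by (intro DD_empty) auto
    then show ?thesis using True by simp
  next
    case F: False
    show ?thesis
    proof (cases "q \<le> p")
      case True
      have IH: "finite (DD (int (p-q)) (int q)) \<and> card (DD (int (p-q)) (int q)) = euclid_sub (p-q) q"
        using 1(1) F True by blast
      have e: "DD (int p) (int q) = insert ((0,1),(1,0)) (sh1 ` DD (int (p-q)) (int q))"
        using DD_rec1[of "int q" "int p"] F True by (simp add: of_nat_diff)
      show ?thesis using IH F True unfolding e
        by (simp add: e0_notin1 card_image inj_on_subset[OF inj_sh1])
    next
      case False
      have IH: "finite (DD (int p) (int (q-p))) \<and> card (DD (int p) (int (q-p))) = euclid_sub p (q-p)"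
        using 1(2) F False by blast
      have e: "DD (int p) (int q) = insert ((0,1),(1,0)) (sh2 ` DD (int p) (int (q-p)))"
        using DD_rec2[of "int p" "int q"] F False by (simp add: of_nat_diff)
      show ?thesis using IH F False unfolding e
        by (simp add: e0_notin2 card_image inj_on_subset[OF inj_sh2])
    qed
  qed
qed

definition FL :: "(int \<times> int) \<times> (int \<times> int) \<Rightarrow> complex set" where
  "FL x = (case x of ((u1,u2),(v1,v2)) \<Rightarrow> farey_line u1 u2 v1 v2)"

lemma frac_lt:
  fixes a b c d :: int
  assumes "0 < b" "0 < d"
  shows "(real_of_int a / real_of_int b < real_of_int c / real_of_int d) \<longleftrightarrow> a*d < c*b"
proof -
  have "(real_of_int a / real_of_int b < real_of_int c / real_of_int d) \<longleftrightarrow>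
      real_of_int a * real_of_int d < real_of_int c * real_of_int b"
    using assms by (simp add: field_simps)
  also have "\<dots> \<longleftrightarrow> a*d < c*b" by (metis of_int_less_iff of_int_mult)
  finally show ?thesis .
qed

lemma vert_case:
  fixes p q k :: int
  assumes pq: "0 < p" "0 < q"
  and w: "w \<in> geo_ray (exp (2*pi*\<i>/3)) (of_int p / of_int q)" "Re w = of_int k"
  shows "{z. 0 < Im z \<and> Re z = of_int k} \<in> FL ` DD p q"
proof -
  let ?r = "real_of_int p / real_of_int q"
  have r: "0 < ?r" using pq by simp
  have "-1/2 \<le> Re w" using w(1) ray_char[OF r] by simp
  then have k0: "0 \<le> k" using w(2) by simp
  have "Re w < ?r" using ray_re_lt[OF r w(1)] .
  then have "real_of_int k / real_of_int 1 < ?r" using w(2) by simp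
  then have kq: "k*q < p*1" using frac_lt[of 1 q k p] pq by simp
  have "((k,1),(1,0)) \<in> DD p q" unfolding DD_def using k0 kq pq by (simp add: algebra_simps)
  moreover have "FL ((k,1),(1,0)) = {z. 0 < Im z \<and> Re z = of_int k}"
    unfolding FL_def by (simp add: fl_v2)
  ultimately show ?thesis by force
qed

lemma circ_case:
  fixes p q m n p' q' :: int
  assumes pq: "0 < p" "0 < q"
  and nz: "n \<noteq> 0" "q' \<noteq> 0" and det: "\<bar>m*q' - n*p'\<bar> = 1"
  and ab: "real_of_int m / real_of_int n < real_of_int p' / real_of_int q'"
  and w: "w \<in> geo_ray (exp (2*pi*\<i>/3)) (of_int p / of_int q)" "w \<in> farey_line m n p' q'"
  shows "farey_line m n p' q' \<in> FL ` DD p q"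
proof -
  define r where "r = real_of_int p / real_of_int q"
  define a where "a = real_of_int m / real_of_int n"
  define b where "b = real_of_int p' / real_of_int q'"
  have r: "0 < r" using pq r_def by simp
  have rw: "0 < Im w" "(Re w - cc r)^2 + (Im w)^2 = (rho r)^2" "-1/2 \<le> Re w"
    using w(1) ray_char[OF r] r_def by auto
  have rlt: "Re w < r" using ray_re_lt[OF r] w(1) r_def by simp
  have fw: "(Re w - a)*(Re w - b) + (Im w)^2 = 0" using w(2) fl_c[OF nz] a_def b_def by auto
  have h0: "hh a b r (Re w) = 0" unfolding hh_def using fw rw(2) by (simp add: algebra_simps)
  have e: "a - b = (real_of_int m * real_of_int q' - real_of_int p' * real_of_int n) / (real_of_int n * real_of_int q')"
    unfolding a_def b_def using nz by (simp add: diff_frac_eq)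
  have e1: "real_of_int \<bar>m*q' - n*p'\<bar> = 1" using det by simp
  have e2: "\<bar>real_of_int m * real_of_int q' - real_of_int p' * real_of_int n\<bar> = 1"
    using e1 by (simp add: mult.commute)
  have e3: "1 \<le> \<bar>real_of_int n * real_of_int q'\<bar>"
  proof -
    have "n*q' \<noteq> 0" using nz by simp
    then have "1 \<le> \<bar>n*q'\<bar>" by linarith
    then have "(1::real) \<le> of_int \<bar>n*q'\<bar>" by (simp only: of_int_1_le_iff)
    then show ?thesis by simp
  qed
  have "\<bar>a - b\<bar> = 1 / \<bar>real_of_int n * real_of_int q'\<bar>" unfolding e abs_divide e2 ..
  moreover have "1 / \<bar>real_of_int n * real_of_int q'\<bar> \<le> 1" using e3 by (simp add: divide_le_eq)
  ultimately have ab1: "\<bar>a - b\<bar> \<le> 1" by simp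
  have hz: "0 < hh a b r (-1/2)" using hh_z0_pos[OF ab1 r] .
  have hr: "hh a b r r < 0"
  proof (rule ccontr)
    assume "\<not> hh a b r r < 0"
    then have "0 \<le> hh a b r r" by simp
    then have "0 \<le> (Re w + 1/2) * hh a b r r" using rw(3) by simp
    moreover have "0 < (r - Re w) * hh a b r (-1/2)" using rlt hz by simp
    ultimately show False using hh_interp[of r a b "Re w"] h0 by simp
  qed
  then have "(r-a)*(r-b) < 0" using hh_r[OF r] by simp
  then have arb: "a < r" "r < b" using ab a_def b_def by (auto simp: mult_less_0_iff)
  define u1 where "u1 = m * sgn n"
  define u2 where "u2 = \<bar>n\<bar>"
  define v1 where "v1 = p' * sgn q'"
  define v2 where "v2 = \<bar>q'\<bar>"
  have u2p: "0 < u2" "0 < v2" using nz u2_def v2_def by auto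
  have ua: "real_of_int u1 / real_of_int u2 = a" unfolding u1_def u2_def a_def
    using nz by (cases "n > 0") (auto simp: sgn_if)
  have vb: "real_of_int v1 / real_of_int v2 = b" unfolding v1_def v2_def b_def
    using nz by (cases "q' > 0") (auto simp: sgn_if)
  have D: "u1*v2 - u2*v1 = sgn n * sgn q' * (m*q' - n*p')"
    unfolding u1_def u2_def v1_def v2_def
    by (simp add: abs_sgn algebra_simps)
  have "\<bar>u1*v2 - u2*v1\<bar> = 1" unfolding D using nz det by (simp add: abs_mult abs_sgn_eq)
  moreover have "u1*v2 < v1*u2" using ab ua vb frac_lt[OF u2p, of u1 v1] a_def b_def by simp
  ultimately have D1: "u1*v2 - u2*v1 = -1" by (simp add: abs_if mult.commute split: if_splits)
  have al: "p*v2 < v1*q" using arb(2) vb frac_lt[of q v2 p v1] pq u2p r_def by simp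
  have be: "u1*q < p*u2" using arb(1) ua frac_lt[of u2 q u1 p] pq u2p r_def by simp
  have "0 < b" using arb r by simp
  then have "0 < real_of_int v1 / real_of_int v2" using vb by simp
  then have v1p: "0 < v1" using u2p by (simp add: zero_less_divide_iff)
  have u1p: "0 \<le> u1"
  proof (rule ccontr)
    assume "\<not> 0 \<le> u1"
    then have "u1 \<le> -1" by simp
    then have "u1*v2 \<le> -1*v2" using u2p by (intro mult_right_mono) auto
    moreover have "u2*1 \<le> u2*v1" using v1p u2p by (intro mult_left_mono) auto
    ultimately show False using D1 u2p by simp
  qed
  have mem: "((u1,u2),(v1,v2)) \<in> DD p q" unfolding DD_def
    using u1p u2p v1p D1 al be by (simp add: algebra_simps)
  have "FL ((u1,u2),(v1,v2)) = farey_line m n p' q'"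
    unfolding FL_def using u2p nz by (simp add: fl_c ua vb a_def b_def)
  then show ?thesis using mem by force
qed

lemma T_sup:
  fixes p q :: int
  assumes pq: "0 < p" "0 < q" and x: "((u1,u2),(v1,v2)) \<in> DD p q"
  shows "FL ((u1,u2),(v1,v2)) \<in> farey_lines"
    and "FL ((u1,u2),(v1,v2)) \<inter> geo_ray (exp (2*pi*\<i>/3)) (of_int p / of_int q) \<noteq> {}"
proof -
  have c: "0 \<le> u1" "0 \<le> u2" "0 \<le> v1" "0 \<le> v2" "u1*v2 - u2*v1 = -1"
      "0 < q*v1 - p*v2" "0 < p*u2 - q*u1" using x unfolding DD_def by auto
  have "\<bar>u1*v2 - u2*v1\<bar> = 1" using c(5) by simp
  then show "FL ((u1,u2),(v1,v2)) \<in> farey_lines" unfolding FL_def farey_lines_def by auto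
  define r where "r = real_of_int p / real_of_int q"
  have r: "0 < r" using pq r_def by simp
  show "FL ((u1,u2),(v1,v2)) \<inter> geo_ray (exp (2*pi*\<i>/3)) (of_int p / of_int q) \<noteq> {}"
  proof (cases "v2 = 0")
    case True
    then have "u2 * v1 = 1" using c(5) by simp
    then have uv: "u2 = 1" "v1 = 1" using c by (auto simp: zmult_eq_1_iff)
    have "u1*q < p*1" using c(7) uv by (simp add: mult.commute)
    then have "real_of_int u1 / real_of_int 1 < r" using frac_lt[of 1 q u1 p] pq r_def by simp
    then have lt: "real_of_int u1 < r" by simp
    define w where "w = Complex (real_of_int u1) (sqrt ((rho r)^2 - (real_of_int u1 - cc r)^2))"
    have wr: "w \<in> geo_ray (exp (2*pi*\<i>/3)) r" unfolding w_def using ray_pt[OF r _ lt] c(1) by simp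
    then have "0 < Im w" using ray_char[OF r] by simp
    then have "w \<in> FL ((u1,u2),(v1,v2))" unfolding FL_def using True uv by (simp add: fl_v2 w_def)
    then show ?thesis using wr r_def by blast
  next
    case False
    then have v2p: "0 < v2" using c by simp
    have u2p: "0 < u2"
    proof (rule ccontr)
      assume "\<not> 0 < u2" then have "u2 = 0" using c by simp
      then have "u1*v2 = -1" using c(5) by simp
      moreover have "0 \<le> u1*v2" using c by simp
      ultimately show False by simp
    qed
    define a where "a = real_of_int u1 / real_of_int u2"
    define b where "b = real_of_int v1 / real_of_int v2"
    have ar: "a < r" unfolding a_def r_def using frac_lt[of u2 q u1 p] pq u2p c(7) by (simp add: mult.commute)
    have rb: "r < b" unfolding b_def r_def using frac_lt[of q v2 p v1] pq v2p c(6) by (simp add: mult.commute)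
    have "b - a = (real_of_int v1 * real_of_int u2 - real_of_int u1 * real_of_int v2) / (real_of_int v2 * real_of_int u2)"
      unfolding a_def b_def using u2p v2p by (simp add: diff_frac_eq)
    also have "real_of_int v1 * real_of_int u2 - real_of_int u1 * real_of_int v2 = 1"
    proof -
      have "v1*u2 - u1*v2 = 1" using c(5) by (simp add: algebra_simps)
      then have "real_of_int (v1*u2 - u1*v2) = 1" by simp
      then show ?thesis by simp
    qed
    finally have ba: "b - a = 1 / (real_of_int v2 * real_of_int u2)" .
    have "1 \<le> real_of_int v2 * real_of_int u2"
    proof -
      have "0 < v2 * u2" using u2p v2p by simp
      then have "1 \<le> v2 * u2" by linarith
      then have "(1::real) \<le> of_int (v2*u2)" by (simp only: of_int_1_le_iff)
      then show ?thesis by simp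
    qed
    then have "1 / (real_of_int v2 * real_of_int u2) \<le> 1" by (simp add: divide_le_eq)
    then have ab1: "\<bar>a - b\<bar> \<le> 1" using ba ar rb by simp
    have hz: "0 < hh a b r (-1/2)" using hh_z0_pos[OF ab1 r] .
    have hr: "hh a b r r < 0" using hh_r[OF r] ar rb by (simp add: mult_pos_neg)
    have cont: "\<forall>x. -1/2 \<le> x \<and> x \<le> r \<longrightarrow> isCont (hh a b r) x"
      unfolding hh_def by (intro allI impI continuous_intros)
    obtain x0 where x0: "-1/2 \<le> x0" "x0 \<le> r" "hh a b r x0 = 0"
      using IVT2[of "hh a b r" r 0 "-1/2", OF _ _ _ cont] hr hz r by force
    have x0r: "x0 < r" using x0 hr by (cases "x0 = r") auto
    define w where "w = Complex x0 (sqrt ((rho r)^2 - (x0 - cc r)^2))"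
    have wr: "w \<in> geo_ray (exp (2*pi*\<i>/3)) r" unfolding w_def using ray_pt[OF r x0(1) x0r] .
    then have im: "0 < Im w" using ray_char[OF r] by simp
    have sq: "(Im w)^2 = (rho r)^2 - (x0 - cc r)^2" unfolding w_def
      using inside[OF r x0(1) x0r] by simp
    have "(Re w - a)*(Re w - b) + (Im w)^2 = hh a b r x0" unfolding hh_def sq by (simp add: w_def)
    then have "w \<in> FL ((u1,u2),(v1,v2))" unfolding FL_def
      using u2p v2p im x0(3) by (simp add: fl_c a_def b_def)
    then show ?thesis using wr r_def by blast
  qed
qed

lemma T_sub:
  fixes p q :: int
  assumes pq: "0 < p" "0 < q" and L: "L \<in> farey_lines"
    and ne: "L \<inter> geo_ray (exp (2*pi*\<i>/3)) (of_int p / of_int q) \<noteq> {}"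
  shows "L \<in> FL ` DD p q"
proof -
  obtain m n p' q' where Le: "L = farey_line m n p' q'" and det: "\<bar>m*q' - n*p'\<bar> = 1"
    using L unfolding farey_lines_def by auto
  obtain w where wL: "w \<in> L" and wr: "w \<in> geo_ray (exp (2*pi*\<i>/3)) (of_int p / of_int q)"
    using ne by blast
  show ?thesis
  proof (cases "n = 0")
    case True
    then have "\<bar>q' * m\<bar> = 1" using det by (simp add: mult.commute)
    then have q1: "\<bar>q'\<bar> = 1" by (rule abs_zmult_eq_1)
    have kk: "real_of_int p' / real_of_int q' = real_of_int (p' * q')"
      using q1 by (cases "q' = 1") (auto simp: abs_if split: if_splits)
    have LL: "L = {z. 0 < Im z \<and> Re z = of_int (p'*q')}" unfolding Le True fl_v1 kk ..
    have "Re w = of_int (p'*q')" using wL LL by simp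
    from vert_case[OF pq wr this] show ?thesis unfolding LL .
  next
    case n0: False
    show ?thesis
    proof (cases "q' = 0")
      case True
      then have "\<bar>n * p'\<bar> = 1" using det by simp
      then have n1: "\<bar>n\<bar> = 1" by (rule abs_zmult_eq_1)
      have kk: "real_of_int m / real_of_int n = real_of_int (m * n)"
        using n1 by (cases "n = 1") (auto simp: abs_if split: if_splits)
      have LL: "L = {z. 0 < Im z \<and> Re z = of_int (m*n)}" unfolding Le True fl_v2[OF n0] kk ..
      have "Re w = of_int (m*n)" using wL LL by simp
      from vert_case[OF pq wr this] show ?thesis unfolding LL .
    next
      case q0: False
      have neq: "real_of_int m / real_of_int n \<noteq> real_of_int p' / real_of_int q'"
      proof
        assume "real_of_int m / real_of_int n = real_of_int p' / real_of_int q'"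
        then have "real_of_int m * real_of_int q' = real_of_int p' * real_of_int n"
          using n0 q0 by (simp add: frac_eq_eq)
        then have "m*q' = p'*n" by (metis of_int_eq_iff of_int_mult)
        then show False using det by (simp add: mult.commute)
      qed
      show ?thesis
      proof (cases "real_of_int m / real_of_int n < real_of_int p' / real_of_int q'")
        case True
        show ?thesis using circ_case[OF pq n0 q0 det True wr] wL Le by simp
      next
        case False
        then have lt: "real_of_int p' / real_of_int q' < real_of_int m / real_of_int n" using neq by simp
        have det2: "\<bar>p'*n - q'*m\<bar> = 1" using det by (simp add: abs_minus_commute mult.commute)
        have "L = farey_line p' q' m n" using Le fl_sym by simp
        then show ?thesis using circ_case[OF pq q0 n0 det2 lt wr] wL by simp
      qed
    qed
  qed
qed

lemma prim_eq:
  fixes u1 u2 u1' u2' s t s' t' :: int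
  assumes "0 < u2" "0 < u2'" "u1*u2' = u1'*u2" "u1*s + u2*t = 1" "u1'*s' + u2'*t' = 1"
  shows "u1 = u1' \<and> u2 = u2'"
proof -
  have "u2' = u2' * (u1*s + u2*t)" using assms(4) by simp
  also have "\<dots> = (u1*u2')*s + u2*u2'*t" by (simp add: algebra_simps)
  also have "\<dots> = u2 * (u1'*s + u2'*t)" using assms(3) by (simp add: algebra_simps)
  finally have d1: "u2 dvd u2'" by (metis dvdI)
  have "u2 = u2 * (u1'*s' + u2'*t')" using assms(5) by simp
  also have "\<dots> = (u1'*u2)*s' + u2*u2'*t'" by (simp add: algebra_simps)
  also have "\<dots> = u2' * (u1*s' + u2*t')" using assms(3) by (simp add: algebra_simps)
  finally have d2: "u2' dvd u2" by (metis dvdI)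
  have e: "u2 = u2'" using d1 d2 assms(1,2) by (simp add: zdvd_antisym_nonneg)
  then have "u1 = u1'" using assms(3) assms(1) by simp
  then show ?thesis using e by simp
qed

lemma FL_circ:
  assumes "0 < u2" "0 < v2"
  shows "FL ((u1,u2),(v1,v2)) = {z. 0 < Im z \<and> (Re z - of_int u1 / of_int u2)*(Re z - of_int v1 / of_int v2) + (Im z)^2 = 0}"
  unfolding FL_def using assms by (simp add: fl_c)

lemma vert_ne_circ:
  assumes "{z. 0 < Im z \<and> Re z = k} = {z. 0 < Im z \<and> (Re z - a)*(Re z - b) + (Im z)^2 = 0}"
  shows False
proof -
  define Y where "Y = 1 + \<bar>(k-a)*(k-b)\<bar>"
  have "Complex k Y \<in> {z. 0 < Im z \<and> Re z = k}" unfolding Y_def by simp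
  then have "(k-a)*(k-b) + Y^2 = 0" using assms by simp
  moreover have "Y \<le> Y^2"
  proof -
    have Y1: "1 \<le> Y" unfolding Y_def by simp
    have "Y * 1 \<le> Y * Y" using Y1 by (intro mult_left_mono) auto
    then show ?thesis by (simp add: power2_eq_square)
  qed
  moreover have "- ((k-a)*(k-b)) < Y" unfolding Y_def by linarith
  ultimately show False by linarith
qed

lemma circ_eq:
  fixes a b a' b' :: real
  assumes ab: "a < b" "a' < b'"
  and eq: "{z. 0 < Im z \<and> (Re z - a)*(Re z - b) + (Im z)^2 = 0} = {z. 0 < Im z \<and> (Re z - a')*(Re z - b') + (Im z)^2 = 0}"
  shows "a = a' \<and> b = b'"
proof -
  have "Complex ((a+b)/2) ((b-a)/2) \<in> {z. 0 < Im z \<and> (Re z - a)*(Re z - b) + (Im z)^2 = 0}"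
    using ab by (simp add: power2_eq_square field_simps)
  then have E1: "((a+b)/2 - a')*((a+b)/2 - b') + ((b-a)/2)^2 = 0" using eq by simp
  have "Complex ((a'+b')/2) ((b'-a')/2) \<in> {z. 0 < Im z \<and> (Re z - a')*(Re z - b') + (Im z)^2 = 0}"
    using ab by (simp add: power2_eq_square field_simps)
  then have E2: "((a'+b')/2 - a)*((a'+b')/2 - b) + ((b'-a')/2)^2 = 0" using eq[symmetric] by simp
  have "((a+b) - (a'+b'))^2 = 2*(((a+b)/2 - a')*((a+b)/2 - b') + ((b-a)/2)^2) + 2*(((a'+b')/2 - a)*((a'+b')/2 - b) + ((b'-a')/2)^2)"
    by (simp add: power2_eq_square field_simps)
  then have "((a+b) - (a'+b'))^2 = 0" using E1 E2 by simp
  then have M: "a + b = a' + b'" by simp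
  then have "((b-a)/2)^2 = ((b'-a')/2)^2" using E1 by (simp add: power2_eq_square field_simps)
  then have "(b-a)/2 = (b'-a')/2" using ab by (simp add: power2_eq_iff_nonneg)
  then show ?thesis using M by simp
qed

lemma DD_facts:
  assumes "((u1,u2),(v1,v2)) \<in> DD p q"
  shows "0 \<le> u1" "0 \<le> u2" "0 \<le> v1" "0 \<le> v2" "u1*v2 - u2*v1 = -1"
    and "v2 = 0 \<Longrightarrow> u2 = 1 \<and> v1 = 1"
    and "v2 \<noteq> 0 \<Longrightarrow> 0 < u2 \<and> 0 < v2 \<and> real_of_int u1 / real_of_int u2 < real_of_int v1 / real_of_int v2"
proof -
  have c: "0 \<le> u1" "0 \<le> u2" "0 \<le> v1" "0 \<le> v2" "u1*v2 - u2*v1 = -1"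
    using assms unfolding DD_def by auto
  then show "0 \<le> u1" "0 \<le> u2" "0 \<le> v1" "0 \<le> v2" "u1*v2 - u2*v1 = -1" by auto
  show "v2 = 0 \<Longrightarrow> u2 = 1 \<and> v1 = 1"
  proof -
    assume "v2 = 0"
    then have "u2 * v1 = 1" using c(5) by simp
    then show ?thesis using c by (auto simp: zmult_eq_1_iff)
  qed
  show "v2 \<noteq> 0 \<Longrightarrow> 0 < u2 \<and> 0 < v2 \<and> real_of_int u1 / real_of_int u2 < real_of_int v1 / real_of_int v2"
  proof -
    assume v: "v2 \<noteq> 0"
    then have v2p: "0 < v2" using c by simp
    have u2p: "0 < u2"
    proof (rule ccontr)
      assume "\<not> 0 < u2" then have "u2 = 0" using c by simp
      then have "u1*v2 = -1" using c(5) by simp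
      moreover have "0 \<le> u1*v2" using c by simp
      ultimately show False by simp
    qed
    have "u1*v2 < v1*u2" using c(5) by (simp add: algebra_simps)
    then show ?thesis using frac_lt[OF u2p v2p] u2p v2p by simp
  qed
qed

lemma FL_inj: "inj_on FL (DD p q)"
proof (rule inj_onI)
  fix x y assume x: "x \<in> DD p q" and y: "y \<in> DD p q" and eq: "FL x = FL y"
  obtain u1 u2 v1 v2 where xe: "x = ((u1,u2),(v1,v2))" by (metis prod.exhaust)
  obtain u1' u2' v1' v2' where ye: "y = ((u1',u2'),(v1',v2'))" by (metis prod.exhaust)
  note fx = DD_facts[OF x[unfolded xe]]
  note fy = DD_facts[OF y[unfolded ye]]
  show "x = y"
  proof (cases "v2 = 0")
    case True
    note a = fx(6)[OF True]
    have Fx: "FL x = {z. 0 < Im z \<and> Re z = of_int u1}" unfolding xe FL_def using a True by (simp add: fl_v2)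
    show ?thesis
    proof (cases "v2' = 0")
      case True2: True
      note b = fy(6)[OF True2]
      have Fy: "FL y = {z. 0 < Im z \<and> Re z = of_int u1'}" unfolding ye FL_def using b True2 by (simp add: fl_v2)
      have "Complex (of_int u1) 1 \<in> FL x" using Fx by simp
      then have "Complex (of_int u1) 1 \<in> FL y" using eq by simp
      then have "u1 = u1'" using Fy by simp
      then show ?thesis using xe ye a b True True2 by simp
    next
      case False
      note b = fy(7)[OF False]
      have "{z. 0 < Im z \<and> Re z = of_int u1} = {z. 0 < Im z \<and> (Re z - of_int u1' / of_int u2')*(Re z - of_int v1' / of_int v2') + (Im z)^2 = 0}"
        using eq Fx FL_circ[of u2' v2' u1' v1'] b ye by simp
      then show ?thesis by (rule vert_ne_circ[THEN FalseE])
    qed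
  next
    case False
    note a = fx(7)[OF False]
    have Fx: "FL x = {z. 0 < Im z \<and> (Re z - of_int u1 / of_int u2)*(Re z - of_int v1 / of_int v2) + (Im z)^2 = 0}"
      using FL_circ[of u2 v2 u1 v1] a xe by simp
    show ?thesis
    proof (cases "v2' = 0")
      case True2: True
      note b = fy(6)[OF True2]
      have Fy: "FL y = {z. 0 < Im z \<and> Re z = of_int u1'}" unfolding ye FL_def using b True2 by (simp add: fl_v2)
      have "{z. 0 < Im z \<and> Re z = of_int u1'} = {z. 0 < Im z \<and> (Re z - of_int u1 / of_int u2)*(Re z - of_int v1 / of_int v2) + (Im z)^2 = 0}"
        using eq Fx Fy by simp
      then show ?thesis by (rule vert_ne_circ[THEN FalseE])
    next
      case False2: False
      note b = fy(7)[OF False2]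
      have Fy: "FL y = {z. 0 < Im z \<and> (Re z - of_int u1' / of_int u2')*(Re z - of_int v1' / of_int v2') + (Im z)^2 = 0}"
        using FL_circ[of u2' v2' u1' v1'] b ye by simp
      have ee: "real_of_int u1 / real_of_int u2 = real_of_int u1' / real_of_int u2' \<and>
                real_of_int v1 / real_of_int v2 = real_of_int v1' / real_of_int v2'"
        using circ_eq[OF conjunct2[OF conjunct2[OF a]] conjunct2[OF conjunct2[OF b]]] eq Fx Fy by simp
      have "real_of_int u1 * real_of_int u2' = real_of_int u1' * real_of_int u2"
        using ee a b by (simp add: frac_eq_eq)
      then have i1: "u1 * u2' = u1' * u2" by (metis of_int_eq_iff of_int_mult)
      have "real_of_int v1 * real_of_int v2' = real_of_int v1' * real_of_int v2"
        using ee a b by (simp add: frac_eq_eq)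
      then have i2: "v1 * v2' = v1' * v2" by (metis of_int_eq_iff of_int_mult)
      have bz1: "u1*(-v2) + u2*v1 = 1" using fx(5) by (simp add: algebra_simps)
      have bz1': "u1'*(-v2') + u2'*v1' = 1" using fy(5) by (simp add: algebra_simps)
      have bz2: "v1*u2 + v2*(-u1) = 1" using fx(5) by (simp add: algebra_simps)
      have bz2': "v1'*u2' + v2'*(-u1') = 1" using fy(5) by (simp add: algebra_simps)
      have "u1 = u1' \<and> u2 = u2'" using prim_eq[OF _ _ i1 bz1 bz1'] a b by simp
      moreover have "v1 = v1' \<and> v2 = v2'" using prim_eq[OF _ _ i2 bz2 bz2'] a b by simp
      ultimately show ?thesis using xe ye by simp
    qed
  qed
qed

theorem lemma12:
  fixes p q :: nat
  assumes "0 < p" and "0 < q" and "coprime p q"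
  shows "euclid_sub p q = d_c (exp (2 * pi * \<i> / 3)) (real p / real q)"
proof -
  have pq: "0 < int p" "0 < int q" using assms by auto
  have r: "geo_ray (exp (2*pi*\<i>/3)) (real_of_int (int p) / real_of_int (int q)) = geo_ray (exp (2*pi*\<i>/3)) (real p / real q)" by simp
  have T: "{L \<in> farey_lines. L \<inter> geo_ray (exp (2*pi*\<i>/3)) (real p / real q) \<noteq> {}} = FL ` DD (int p) (int q)"
  proof (rule set_eqI, rule iffI)
    fix L assume L: "L \<in> {L \<in> farey_lines. L \<inter> geo_ray (exp (2*pi*\<i>/3)) (real p / real q) \<noteq> {}}"
    then have Lf: "L \<in> farey_lines" by blast
    from L have "L \<inter> geo_ray (exp (2*pi*\<i>/3)) (real_of_int (int p) / real_of_int (int q)) \<noteq> {}"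
      unfolding r by blast
    then show "L \<in> FL ` DD (int p) (int q)" using T_sub[OF pq Lf] by blast
  next
    fix L assume "L \<in> FL ` DD (int p) (int q)"
    then obtain x where x: "x \<in> DD (int p) (int q)" "L = FL x" by blast
    obtain u1 u2 v1 v2 where xe: "x = ((u1,u2),(v1,v2))" by (metis prod.exhaust)
    note S = T_sup[OF pq x(1)[unfolded xe]]
    have "L \<in> farey_lines" using S(1) x(2) xe by simp
    moreover have "L \<inter> geo_ray (exp (2*pi*\<i>/3)) (real p / real q) \<noteq> {}"
      using S(2) x(2) xe unfolding r by simp
    ultimately show "L \<in> {L \<in> farey_lines. L \<inter> geo_ray (exp (2*pi*\<i>/3)) (real p / real q) \<noteq> {}}"
      by blast
  qed
  have "d_c (exp (2 * pi * \<i> / 3)) (real p / real q) = card (FL ` DD (int p) (int q))"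
    unfolding d_c_def T ..
  also have "\<dots> = card (DD (int p) (int q))" using FL_inj by (rule card_image)
  also have "\<dots> = euclid_sub p q" using DD_card by simp
  finally show ?thesis by simp
qed

end
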